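(* Fix $\mu\in(0,1)$, $j\in\{2,3\}$, $T^*>0$ and relatively prime positive integers $a,b$ with $aT^*=b\pi$. Let $\mathbf{X}^*=(x^*,y^*,z^*,x^{*\prime},y^{*\prime},z^{*\prime})$ be a $T^*$-periodic function $\mathbb{R}\to\mathbb{R}^6$, with $\mathbf{r}^*=(x^*,y^*,z^* )$ of class $C^1$ avoiding $(-\mu,0,0)$ and $(1-\mu,0,0)$. Let $s\in\mathbb{R}$ satisfy the half-period symmetry conditions: for all $\tau\in[0,T^*/2]$, $$x^*(s+T^*-\tau)=x^*(s+\tau),\quad x^{*\prime}(s+T^*-\tau)=-x^{*\prime}(s+\tau),$$ $$y^*(s+T^*-\tau)=-y^*(s+\tau),\quad y^{*\prime}(s+T^*-\tau)=y^{*\prime}(s+\tau),$$ $$z^*(s+T^*-\tau)\,z^{*\prime}(s+T^*-\tau)=-z^*(s+\tau)\,z^{*\prime}(s+\tau).$$ Let $\mathcal{M}(s,\tau_0)=\int_0^{aT^*}\mathbf{h}_j(\mathbf{X}^*(s+\tau),\tau_0+\tau)\cdot\mathbf{r}^{*\prime}(s+\tau)\,d\tau$. Then for every $\tau_0\in\mathbb{R}$, $$\mathcal{M}(s,\tau_0)=2AB,\qquad A=\begin{cases}\sin(2\tau_0),& a=1,\\ 0,&a>1,\end{cases}$$ $$B=\int_0^{T^*/2}\Big(K_j\big(\mathbf{X}^*(s+\tau)\big)\cos(2\tau)-J_j\big(\mathbf{X}^*(s+\tau)\big)\sin(2\tau)\Big)\,d\tau.$$ In particular, if $a>1$ then $\mathcal{M}(s',\tau_0)=0$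 for all $s',\tau_0$, and if $a=1$ then $\mathcal{M}(s,\tau_0)=0$ whenever $\tau_0\in\frac{\pi}{2}\mathbb{Z}$.
   Context: For $\mathbf{r}=(x,y,z)$ write $\mathbf{R}_{1-\mu}=(x+\mu,y,z)$, $\mathbf{R}_\mu=(x-1+\mu,y,z)$, $R_{1-\mu}=|\mathbf{R}_{1-\mu}|$, $R_\mu=|\mathbf{R}_\mu|$, and $P(\mathbf{r})=\big(\frac{1-\mu}{R_{1-\mu}^3}-\frac{\mu}{R_\mu^3}\big)I_3-\frac{3}{R_{1-\mu}^5}\mathbf{R}_{1-\mu}\mathbf{R}_{1-\mu}^T+\frac{3}{R_\mu^5}\mathbf{R}_\mu\mathbf{R}_\mu^T$. For $\mathbf{X}=(\mathbf{r},\mathbf{r}')$, $\mathbf{r}'=(x',y',z')$: $\mathbf{h}_2(\mathbf{X},\alpha)=-\frac32\begin{bmatrix}-\cos2\alpha&\sin2\alpha&0\\ \sin2\alpha&\cos2\alpha&0\\0&0&2/3\end{bmatrix}\mathbf{r}-\frac18(1-\mu)\mu P(\mathbf{r})(-8\cos2\alpha,11\sin2\alpha,0)^T$, and $\mathbf{h}_3(\mathbf{X},\alpha)=-\frac1{12}(1-\mu)\mu P(\mathbf{r})(-38\cos2\alpha,59\sin2\alpha,0)^T$. With $\mathbf{e}_1=(1,0,0)^T$, $\mathbf{e}_2=(0,1,0)^T$, define $J_2(\mathbf{X})=\tfrac32(xx'-yy')+(1-\mu)\mu\,(P(\mathbf{r})\mathbf{e}_1)\cdot\mathbf{r}'$,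 $K_2(\mathbf{X})=-\tfrac32(yx'+xy')-\tfrac{11}{8}(1-\mu)\mu\,(P(\mathbf{r})\mathbf{e}_2)\cdot\mathbf{r}'$, $J_3(\mathbf{X})=\tfrac{38}{12}(1-\mu)\mu\,(P(\mathbf{r})\mathbf{e}_1)\cdot\mathbf{r}'$, $K_3(\mathbf{X})=-\tfrac{59}{12}(1-\mu)\mu\,(P(\mathbf{r})\mathbf{e}_2)\cdot\mathbf{r}'$, so that $\mathbf{h}_2(\mathbf{X},\alpha)\cdot\mathbf{r}'=J_2\cos2\alpha+K_2\sin2\alpha-zz'$ and $\mathbf{h}_3(\mathbf{X},\alpha)\cdot\mathbf{r}'=J_3\cos2\alpha+K_3\sin2\alpha$. These are the leading-order Melnikov perturbation terms of the Hill Restricted 4-Body Problem (forcing period $\pi$). *)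

theory Defs
  imports "HOL-Analysis.Analysis"
begin

text \<open>Hill Restricted 4-Body Problem: leading-order Melnikov perturbation terms.
  Points of R^3 are \<open>real^3\<close>, a phase point X = (r, r') is a pair.\<close>

definition Rone :: "real \<Rightarrow> real^3 \<Rightarrow> real^3" where
  "Rone \<mu> r = vector [r$1 + \<mu>, r$2, r$3]"

definition Rmu :: "real \<Rightarrow> real^3 \<Rightarrow> real^3" where
  "Rmu \<mu> r = vector [r$1 - 1 + \<mu>, r$2, r$3]"

definition Pmat :: "real \<Rightarrow> real^3 \<Rightarrow> real^3^3" where
  "Pmat \<mu> r =
     ((1 - \<mu>) / norm (Rone \<mu> r) ^ 3 - \<mu> / norm (Rmu \<mu> r) ^ 3) *\<^sub>R mat 1
     - (3 / norm (Rone \<mu> r) ^ 5) *\<^sub>R (\<chi> i k. (Rone \<mu> r)$i * (Rone \<mu> r)$k)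
     + (3 / norm (Rmu \<mu> r) ^ 5) *\<^sub>R (\<chi> i k. (Rmu \<mu> r)$i * (Rmu \<mu> r)$k)"

definition e1 :: "real^3" where "e1 = vector [1, 0, 0]"
definition e2 :: "real^3" where "e2 = vector [0, 1, 0]"

definition h2 :: "real \<Rightarrow> (real^3) \<times> (real^3) \<Rightarrow> real \<Rightarrow> real^3" where
  "h2 \<mu> X \<alpha> =
     - (3/2) *\<^sub>R ((vector [vector [- cos (2*\<alpha>), sin (2*\<alpha>), 0],
                           vector [sin (2*\<alpha>), cos (2*\<alpha>), 0],
                           vector [0, 0, 2/3]] :: real^3^3) *v fst X)
     - ((1/8) * (1 - \<mu>) * \<mu>) *\<^sub>R
         (Pmat \<mu> (fst X) *v vector [- 8 * cos (2*\<alpha>), 11 * sin (2*\<alpha>), 0])"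

definition h3 :: "real \<Rightarrow> (real^3) \<times> (real^3) \<Rightarrow> real \<Rightarrow> real^3" where
  "h3 \<mu> X \<alpha> =
     - ((1/12) * (1 - \<mu>) * \<mu>) *\<^sub>R
         (Pmat \<mu> (fst X) *v vector [- 38 * cos (2*\<alpha>), 59 * sin (2*\<alpha>), 0])"

definition J2 :: "real \<Rightarrow> (real^3) \<times> (real^3) \<Rightarrow> real" where
  "J2 \<mu> X = (let r = fst X; v = snd X in
     (3/2) * (r$1 * v$1 - r$2 * v$2) + (1 - \<mu>) * \<mu> * ((Pmat \<mu> r *v e1) \<bullet> v))"

definition K2 :: "real \<Rightarrow> (real^3) \<times> (real^3) \<Rightarrow> real" where
  "K2 \<mu> X = (let r = fst X; v = snd X in
     - (3/2) * (r$2 * v$1 + r$1 * v$2) - (11/8) * (1 - \<mu>) * \<mu> * ((Pmat \<mu> r *v e2) \<bullet> v))"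

definition J3 :: "real \<Rightarrow> (real^3) \<times> (real^3) \<Rightarrow> real" where
  "J3 \<mu> X = (38/12) * (1 - \<mu>) * \<mu> * ((Pmat \<mu> (fst X) *v e1) \<bullet> snd X)"

definition K3 :: "real \<Rightarrow> (real^3) \<times> (real^3) \<Rightarrow> real" where
  "K3 \<mu> X = - (59/12) * (1 - \<mu>) * \<mu> * ((Pmat \<mu> (fst X) *v e2) \<bullet> snd X)"

definition hj :: "nat \<Rightarrow> real \<Rightarrow> (real^3) \<times> (real^3) \<Rightarrow> real \<Rightarrow> real^3" where
  "hj j \<mu> X \<alpha> = (if j = 2 then h2 \<mu> X \<alpha> else h3 \<mu> X \<alpha>)"
definition Jj :: "nat \<Rightarrow> real \<Rightarrow> (real^3) \<times> (real^3) \<Rightarrow> real" where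
  "Jj j \<mu> X = (if j = 2 then J2 \<mu> X else J3 \<mu> X)"
definition Kj :: "nat \<Rightarrow> real \<Rightarrow> (real^3) \<times> (real^3) \<Rightarrow> real" where
  "Kj j \<mu> X = (if j = 2 then K2 \<mu> X else K3 \<mu> X)"

text \<open>Melnikov function M(s, tau0) along the orbit t \<mapsto> (r t, v t), v = r'.\<close>
definition melnikov ::
  "nat \<Rightarrow> real \<Rightarrow> (real \<Rightarrow> real^3) \<Rightarrow> (real \<Rightarrow> real^3) \<Rightarrow> real \<Rightarrow> real \<Rightarrow> real \<Rightarrow> real" where
  "melnikov j \<mu> r v L s \<tau>0 =
     integral {0..L} (\<lambda>\<tau>. hj j \<mu> (r (s + \<tau>), v (s + \<tau>)) (\<tau>0 + \<tau>) \<bullet> v (s + \<tau>))"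

end

theory Submission
  imports Defs
begin

definition nn :: "real \<Rightarrow> real \<Rightarrow> real \<Rightarrow> real \<Rightarrow> real" where
 "nn c x y z2 = sqrt ((x + c)^2 + y^2 + z2)"

definition PE1 where
 "PE1 \<mu> x y z2 w xd yd =
   (let n1 = nn \<mu> x y z2; n2 = nn (\<mu> - 1) x y z2; A = x + \<mu>; B = x - 1 + \<mu>;
        c = (1 - \<mu>) / n1^3 - \<mu> / n2^3 in
    (c - 3*A^2/n1^5 + 3*B^2/n2^5) * xd + (-3*A*y/n1^5 + 3*B*y/n2^5) * yd
     + (-3*A/n1^5 + 3*B/n2^5) * w)"

definition PE2 where
 "PE2 \<mu> x y z2 w xd yd =
   (let n1 = nn \<mu> x y z2; n2 = nn (\<mu> - 1) x y z2; A = x + \<mu>; B = x - 1 + \<mu>;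
        c = (1 - \<mu>) / n1^3 - \<mu> / n2^3 in
    (-3*A*y/n1^5 + 3*B*y/n2^5) * xd + (c - 3*y^2/n1^5 + 3*y^2/n2^5) * yd
     + (-3*y/n1^5 + 3*y/n2^5) * w)"

lemma norm3: "norm (x::real^3) = sqrt ((x$1)^2 + (x$2)^2 + (x$3)^2)"
  by (simp add: norm_eq_sqrt_inner inner_vec_def sum_3 power2_eq_square)

lemma normRone: "norm (Rone \<mu> r) = nn \<mu> (r$1) (r$2) ((r$3)^2)"
  by (simp add: norm3 Rone_def nn_def)
lemma normRmu: "norm (Rmu \<mu> r) = nn (\<mu> - 1) (r$1) (r$2) ((r$3)^2)"
  by (simp add: norm3 Rmu_def nn_def algebra_simps)

lemma PE1_eq: "(Pmat \<mu> r *v e1) \<bullet> v = PE1 \<mu> (r$1) (r$2) ((r$3)^2) (r$3 * v$3) (v$1) (v$2)"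
  unfolding Pmat_def PE1_def Let_def normRone normRmu
  by (simp add: matrix_vector_mult_def inner_vec_def sum_3 e1_def mat_def Rone_def Rmu_def
     power2_eq_square divide_inverse algebra_simps)

lemma PE2_eq: "(Pmat \<mu> r *v e2) \<bullet> v = PE2 \<mu> (r$1) (r$2) ((r$3)^2) (r$3 * v$3) (v$1) (v$2)"
  unfolding Pmat_def PE2_def Let_def normRone normRmu
  by (simp add: matrix_vector_mult_def inner_vec_def sum_3 e2_def mat_def Rone_def Rmu_def
     power2_eq_square divide_inverse algebra_simps)

lemma mv3: "((M::real^3^3) *v vector [p, q, 0]) \<bullet> v = p * ((M *v e1) \<bullet> v) + q * ((M *v e2) \<bullet> v)"
  by (simp add: matrix_vector_mult_def inner_vec_def sum_3 e1_def e2_def algebra_simps)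

lemma mexp: "((vector [vector [a1, b1, c1], vector [a2, b2, c2], vector [a3, b3, c3]] :: real^3^3) *v x) \<bullet> v
   = (a1 * x$1 + b1 * x$2 + c1 * x$3) * v$1 + (a2 * x$1 + b2 * x$2 + c2 * x$3) * v$2 + (a3 * x$1 + b3 * x$2 + c3 * x$3) * v$3"
  by (simp add: matrix_vector_mult_def inner_vec_def sum_3)

lemma h_dot: "hj j \<mu> (r, v) \<alpha> \<bullet> v = Jj j \<mu> (r, v) * cos (2*\<alpha>) + Kj j \<mu> (r, v) * sin (2*\<alpha>)
     - (if j = 2 then r$3 * v$3 else 0)"
  unfolding hj_def Jj_def Kj_def h2_def h3_def J2_def K2_def J3_def K3_def Let_def fst_conv snd_conv
  by (cases "j = 2"; simp only: simp_thms if_True if_False inner_diff_left inner_minus_left inner_scaleR_left mv3 mexp; simp add: field_simps)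

lemma periodic_n: assumes "\<And>t. f (t + T) = f t" shows "f (t + real n * T) = f t"
proof (induction n)
  case 0 then show ?case by simp
next
  case (Suc n)
  have "f (t + real (Suc n) * T) = f ((t + real n * T) + T)" by (simp add: algebra_simps)
  also have "\<dots> = f (t + real n * T)" by (rule assms)
  finally show ?case using Suc by simp
qed

lemma trig_sum_zero:
  fixes x \<phi> :: real and a :: nat
  assumes "cis x \<noteq> 1" "cis x ^ a = 1"
  shows "(\<Sum>k<a. cos (\<phi> + real k * x)) = 0" "(\<Sum>k<a. sin (\<phi> + real k * x)) = 0"
proof -
  have "(\<Sum>k<a. cis (\<phi> + real k * x)) = cis \<phi> * (\<Sum>k<a. cis x ^ k)"
    unfolding sum_distrib_left by (rule sum.cong) (simp_all only: Complex.DeMoivre cis_mult)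
  also have "(\<Sum>k<a. cis x ^ k) = 0" using assms by (simp add: geometric_sum)
  finally have z: "(\<Sum>k<a. cis (\<phi> + real k * x)) = 0" by simp
  have "(\<Sum>k<a. cos (\<phi> + real k * x)) = Re (\<Sum>k<a. cis (\<phi> + real k * x))" by simp
  then show "(\<Sum>k<a. cos (\<phi> + real k * x)) = 0" using z by simp
  have "(\<Sum>k<a. sin (\<phi> + real k * x)) = Im (\<Sum>k<a. cis (\<phi> + real k * x))" by simp
  then show "(\<Sum>k<a. sin (\<phi> + real k * x)) = 0" using z by simp
qed

lemma one_period:
  fixes J K :: "real \<Rightarrow> real"
  assumes J: "continuous_on UNIV J" and K: "continuous_on UNIV K"
  shows "integral {0..T} (\<lambda>\<tau>. J \<tau> * cos (\<phi> + 2*\<tau>) + K \<tau> * sin (\<phi> + 2*\<tau>))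
     = cos \<phi> * integral {0..T} (\<lambda>\<tau>. J \<tau> * cos (2*\<tau>) + K \<tau> * sin (2*\<tau>))
     + sin \<phi> * integral {0..T} (\<lambda>\<tau>. K \<tau> * cos (2*\<tau>) - J \<tau> * sin (2*\<tau>))"
proof -
  have c1: "continuous_on UNIV (\<lambda>\<tau>. J \<tau> * cos (2*\<tau>) + K \<tau> * sin (2*\<tau>))"
    using J K by (intro continuous_intros) auto
  have c2: "continuous_on UNIV (\<lambda>\<tau>. K \<tau> * cos (2*\<tau>) - J \<tau> * sin (2*\<tau>))"
    using J K by (intro continuous_intros) auto
  have i1: "(\<lambda>\<tau>. J \<tau> * cos (2*\<tau>) + K \<tau> * sin (2*\<tau>)) integrable_on {0..T}"
    using c1 by (meson continuous_on_subset integrable_continuous_interval subset_UNIV)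
  have i2: "(\<lambda>\<tau>. K \<tau> * cos (2*\<tau>) - J \<tau> * sin (2*\<tau>)) integrable_on {0..T}"
    using c2 by (meson continuous_on_subset integrable_continuous_interval subset_UNIV)
  have "(\<lambda>\<tau>. J \<tau> * cos (\<phi> + 2*\<tau>) + K \<tau> * sin (\<phi> + 2*\<tau>)) =
        (\<lambda>\<tau>. cos \<phi> * (J \<tau> * cos (2*\<tau>) + K \<tau> * sin (2*\<tau>)) + sin \<phi> * (K \<tau> * cos (2*\<tau>) - J \<tau> * sin (2*\<tau>)))"
    by (rule ext) (simp add: cos_add sin_add algebra_simps)
  then show ?thesis
    using i1 i2 by (simp add: Henstock_Kurzweil_Integration.integral_add integrable_on_mult_right)
qed

lemma periods:
  fixes J K :: "real \<Rightarrow> real"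
  assumes J: "continuous_on UNIV J" and K: "continuous_on UNIV K" and T: "T > 0"
    and pJ: "\<And>t. J (t + T) = J t" and pK: "\<And>t. K (t + T) = K t"
  shows "integral {0..real n * T} (\<lambda>\<tau>. J \<tau> * cos (\<phi> + 2*\<tau>) + K \<tau> * sin (\<phi> + 2*\<tau>))
     = (\<Sum>k<n. cos (\<phi> + real k * (2*T)) * integral {0..T} (\<lambda>\<tau>. J \<tau> * cos (2*\<tau>) + K \<tau> * sin (2*\<tau>))
          + sin (\<phi> + real k * (2*T)) * integral {0..T} (\<lambda>\<tau>. K \<tau> * cos (2*\<tau>) - J \<tau> * sin (2*\<tau>)))"
proof (induction n)
  case 0 then show ?case by simp
next
  case (Suc n)
  let ?F = "\<lambda>\<tau>. J \<tau> * cos (\<phi> + 2*\<tau>) + K \<tau> * sin (\<phi> + 2*\<tau>)"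
  have cF: "continuous_on UNIV ?F" using J K by (intro continuous_intros) auto
  have iF: "?F integrable_on {0..real (Suc n) * T}"
    using cF by (meson continuous_on_subset integrable_continuous_interval subset_UNIV)
  have "integral {0..real (Suc n) * T} ?F = integral {0..real n * T} ?F + integral {real n * T..real (Suc n) * T} ?F"
    using Henstock_Kurzweil_Integration.integral_combine[OF _ _ iF, of "real n * T"] T by (simp add: mult_right_mono)
  also have "integral {real n * T..real (Suc n) * T} ?F = integral {0..T} (\<lambda>\<tau>. ?F (\<tau> + real n * T))"
    using integral_shift_real_ivl[of "real n * T" "real n * T" "real (Suc n) * T" ?F] by (simp add: algebra_simps)
  also have "(\<lambda>\<tau>. ?F (\<tau> + real n * T)) = (\<lambda>\<tau>. J \<tau> * cos ((\<phi> + real n * (2*T)) + 2*\<tau>) + K \<tau> * sin ((\<phi> + real n * (2*T)) + 2*\<tau>))"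
    by (rule ext) (simp add: periodic_n[of J, OF pJ] periodic_n[of K, OF pK], simp add: algebra_simps)
  also have "integral {0..T} \<dots> = cos (\<phi> + real n * (2*T)) * integral {0..T} (\<lambda>\<tau>. J \<tau> * cos (2*\<tau>) + K \<tau> * sin (2*\<tau>))
          + sin (\<phi> + real n * (2*T)) * integral {0..T} (\<lambda>\<tau>. K \<tau> * cos (2*\<tau>) - J \<tau> * sin (2*\<tau>))"
    by (rule one_period[OF J K])
  finally show ?case using Suc by simp
qed

lemma many_zero:
  fixes J K :: "real \<Rightarrow> real" and a b :: nat
  assumes J: "continuous_on UNIV J" and K: "continuous_on UNIV K" and T: "T > 0"
    and pJ: "\<And>t. J (t + T) = J t" and pK: "\<And>t. K (t + T) = K t"
    and a1: "a > 1" and cop: "coprime a b" and ab: "real a * T = real b * pi"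
  shows "integral {0..real a * T} (\<lambda>\<tau>. J \<tau> * cos (\<phi> + 2*\<tau>) + K \<tau> * sin (\<phi> + 2*\<tau>)) = 0"
proof -
  have e: "real a * (2*T) = 2 * pi * real b" using ab by (simp add: algebra_simps)
  have "cis (2*T) ^ a = cis (2 * pi * real b)"
    by (simp only: Complex.DeMoivre e)
  also have "\<dots> = 1" by (rule cis_multiple_2pi) simp
  finally have c1: "cis (2*T) ^ a = 1" .
  have c2: "cis (2*T) \<noteq> 1"
  proof
    assume "cis (2*T) = 1"
    then have "Re (cis (2*T)) = 1" by simp
    then have "cos (2*T) = 1" by simp
    then obtain n :: int where n: "2*T = real_of_int n * 2 * pi" using cos_one_2pi_int by blast
    then have "T = n * pi" by simp
    with ab have "real a * (n * pi) = real b * pi" by simp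
    then have "real a * n = real b" by simp
    then have "int a * n = int b" by (metis of_int_eq_iff of_int_mult of_int_of_nat_eq)
    then have "int a dvd int b" unfolding dvd_def by (metis)
    then have "a dvd b" by simp
    with cop have "a = 1" by (simp add: coprime_absorb_left)
    with a1 show False by simp
  qed
  show ?thesis
    unfolding periods[OF J K T pJ pK] sum.distrib sum_distrib_right[symmetric]
    using trig_sum_zero[OF c2 c1] by simp
qed

lemma half_sym:
  fixes J K :: "real \<Rightarrow> real" and b :: nat
  assumes J: "continuous_on UNIV J" and K: "continuous_on UNIV K" and T: "T > 0"
    and Tb: "T = real b * pi"
    and sJ: "\<And>\<tau>. 0 \<le> \<tau> \<Longrightarrow> \<tau> \<le> T/2 \<Longrightarrow> J (T - \<tau>) = - J \<tau>"
    and sK: "\<And>\<tau>. 0 \<le> \<tau> \<Longrightarrow> \<tau> \<le> T/2 \<Longrightarrow> K (T - \<tau>) = K \<tau>"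
  shows "integral {0..T} (\<lambda>\<tau>. J \<tau> * cos (\<phi> + 2*\<tau>) + K \<tau> * sin (\<phi> + 2*\<tau>))
     = 2 * sin \<phi> * integral {0..T/2} (\<lambda>\<tau>. K \<tau> * cos (2*\<tau>) - J \<tau> * sin (2*\<tau>))"
proof -
  let ?F = "\<lambda>\<tau>. J \<tau> * cos (\<phi> + 2*\<tau>) + K \<tau> * sin (\<phi> + 2*\<tau>)"
  have cF: "continuous_on UNIV ?F" using J K by (intro continuous_intros) auto
  have iF: "\<And>u v. ?F integrable_on {u..v}"
    using cF by (meson continuous_on_subset integrable_continuous_interval subset_UNIV)
  have cG: "continuous_on UNIV (\<lambda>\<tau>. ?F (T - \<tau>))" 
    by (rule continuous_on_compose2[OF cF]) (auto intro: continuous_intros)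
  have iG: "(\<lambda>\<tau>. ?F (T - \<tau>)) integrable_on {0..T/2}"
    using cG by (meson continuous_on_subset integrable_continuous_interval subset_UNIV)
  have "integral {0..T} ?F = integral {0..T/2} ?F + integral {T/2..T} ?F"
    using Henstock_Kurzweil_Integration.integral_combine[OF _ _ iF, of 0 "T/2" T] T by simp
  also have "integral {T/2..T} ?F = integral {T/2 - T..T - T} (\<lambda>x. ?F (x + T))"
    by (rule integral_shift_real_ivl[symmetric])
  also have "\<dots> = integral {-(T/2)..0} (\<lambda>x. ?F (x + T))" by simp
  also have "\<dots> = integral {-0..-(-(T/2))} (\<lambda>x. ?F (-x + T))"
    using Henstock_Kurzweil_Integration.integral_reflect_real[of 0 "-(T/2)" "\<lambda>x. ?F (x + T)"] by simp
  also have "\<dots> = integral {0..T/2} (\<lambda>x. ?F (T - x))" by (simp add: algebra_simps)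
  also have "integral {0..T/2} ?F + \<dots> = integral {0..T/2} (\<lambda>x. ?F x + ?F (T - x))"
    using iF iG by (simp add: Henstock_Kurzweil_Integration.integral_add)
  also have "\<dots> = integral {0..T/2} (\<lambda>\<tau>. 2 * sin \<phi> * (K \<tau> * cos (2*\<tau>) - J \<tau> * sin (2*\<tau>)))"
  proof (rule integral_cong)
    fix \<tau> assume "\<tau> \<in> {0..T/2}"
    then have h: "0 \<le> \<tau>" "\<tau> \<le> T/2" by auto
    have e1: "\<phi> + 2 * (T - \<tau>) = (\<phi> - 2*\<tau>) + 2 * pi * real b" using Tb by (simp add: algebra_simps)
    have cc: "cos (\<phi> + 2 * (T - \<tau>)) = cos (\<phi> - 2*\<tau>)"
      unfolding e1 by (simp add: cos_add cos_integer_2pi sin_integer_2pi)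
    have ss: "sin (\<phi> + 2 * (T - \<tau>)) = sin (\<phi> - 2*\<tau>)"
      unfolding e1 by (simp add: sin_add cos_integer_2pi sin_integer_2pi)
    show "?F \<tau> + ?F (T - \<tau>) = 2 * sin \<phi> * (K \<tau> * cos (2*\<tau>) - J \<tau> * sin (2*\<tau>))"
      unfolding cc ss sJ[OF h] sK[OF h] by (simp add: cos_add sin_add cos_diff sin_diff algebra_simps)
  qed
  also have "\<dots> = 2 * sin \<phi> * integral {0..T/2} (\<lambda>\<tau>. K \<tau> * cos (2*\<tau>) - J \<tau> * sin (2*\<tau>))"
    by simp
  finally show ?thesis .
qed


lemma PE1_sym: "PE1 \<mu> x (-y) z2 (-w) (-xd) yd = - PE1 \<mu> x y z2 w xd yd"
  by (simp add: PE1_def Let_def nn_def algebra_simps)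
lemma PE2_sym: "PE2 \<mu> x (-y) z2 (-w) (-xd) yd = PE2 \<mu> x y z2 w xd yd"
  by (simp add: PE2_def Let_def nn_def algebra_simps)

lemma JK_sym:
  assumes "r'$1 = r$1" "v'$1 = -v$1" "r'$2 = -r$2" "v'$2 = v$2" "(r'$3)^2 = (r$3)^2"
    "r'$3 * v'$3 = -(r$3 * v$3)"
  shows "Jj j \<mu> (r',v') = - Jj j \<mu> (r,v)" "Kj j \<mu> (r',v') = Kj j \<mu> (r,v)"
  unfolding Jj_def J2_def J3_def Kj_def K2_def K3_def Let_def fst_conv snd_conv PE1_eq PE2_eq assms
  by (simp_all add: PE1_sym PE2_sym algebra_simps)

lemma cont_nn: "continuous_on UNIV x \<Longrightarrow> continuous_on UNIV y \<Longrightarrow> continuous_on UNIV z2 \<Longrightarrow>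
   continuous_on UNIV (\<lambda>t. nn c (x t) (y t) (z2 t))"
  unfolding nn_def by (intro continuous_intros)

lemma cont_PE:
  assumes "continuous_on UNIV x" "continuous_on UNIV y" "continuous_on UNIV z2" "continuous_on UNIV w"
    "continuous_on UNIV xd" "continuous_on UNIV yd"
    "\<And>t. nn \<mu> (x t) (y t) (z2 t) \<noteq> 0" "\<And>t. nn (\<mu> - 1) (x t) (y t) (z2 t) \<noteq> 0"
  shows "continuous_on UNIV (\<lambda>t. PE1 \<mu> (x t) (y t) (z2 t) (w t) (xd t) (yd t))"
    "continuous_on UNIV (\<lambda>t. PE2 \<mu> (x t) (y t) (z2 t) (w t) (xd t) (yd t))"
  unfolding PE1_def PE2_def Let_def
  by (intro continuous_intros cont_nn assms; simp add: assms)+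

lemma nn_nz1: "(r::real^3) \<noteq> vector [- \<mu>, 0, 0] \<Longrightarrow> nn \<mu> (r$1) (r$2) ((r$3)^2) \<noteq> 0"
proof
  assume r: "r \<noteq> vector [- \<mu>, 0, 0]" and "nn \<mu> (r$1) (r$2) ((r$3)^2) = 0"
  then have "(r$1 + \<mu>)^2 + (r$2)^2 + (r$3)^2 = 0" by (simp add: nn_def)
  then have "r$1 + \<mu> = 0" "r$2 = 0" "r$3 = 0" by (smt (verit) zero_le_power2 zero_eq_power2)+
  then have "r = vector [- \<mu>, 0, 0]" by (simp add: vec_eq_iff forall_3)
  with r show False by simp
qed

lemma nn_nz2: "(r::real^3) \<noteq> vector [1 - \<mu>, 0, 0] \<Longrightarrow> nn (\<mu> - 1) (r$1) (r$2) ((r$3)^2) \<noteq> 0"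
proof
  assume r: "r \<noteq> vector [1 - \<mu>, 0, 0]" and "nn (\<mu> - 1) (r$1) (r$2) ((r$3)^2) = 0"
  then have "(r$1 + (\<mu> - 1))^2 + (r$2)^2 + (r$3)^2 = 0" by (simp add: nn_def)
  then have "r$1 + (\<mu> - 1) = 0" "r$2 = 0" "r$3 = 0" by (smt (verit) zero_le_power2 zero_eq_power2)+
  then have "r = vector [1 - \<mu>, 0, 0]" by (simp add: vec_eq_iff forall_3)
  with r show False by simp
qed


lemma shift_deriv:
  fixes f f' :: "real \<Rightarrow> real"
  assumes "\<And>t. (f has_real_derivative f' t) (at t)"
  shows "((\<lambda>x. f (c + x)) has_real_derivative f' (c + x)) (at x)"
    "((\<lambda>x. f (c - x)) has_real_derivative - f' (c - x)) (at x)"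
proof -
  have "((\<lambda>x. f (c + x)) has_real_derivative f' (c + x) * 1) (at x)"
    by (rule DERIV_chain2[OF assms]) (auto intro!: derivative_eq_intros)
  then show "((\<lambda>x. f (c + x)) has_real_derivative f' (c + x)) (at x)" by simp
  have "((\<lambda>x. f (c - x)) has_real_derivative f' (c - x) * (-1)) (at x)"
    by (rule DERIV_chain2[OF assms]) (auto intro!: derivative_eq_intros)
  then show "((\<lambda>x. f (c - x)) has_real_derivative - f' (c - x)) (at x)" by simp
qed

theorem proposition3:
  fixes \<mu> T s :: real and j a b :: nat
    and r v :: "real \<Rightarrow> real^3"
  assumes mu: "0 < \<mu>" "\<mu> < 1"
    and j: "j \<in> {2, 3}"
    and T: "T > 0"
    and ab: "a > 0" "b > 0" "coprime a b" "real a * T = real b * pi"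
    and deriv: "\<And>t. (r has_vector_derivative v t) (at t)"
    and cont: "continuous_on UNIV v"
    and per: "\<And>t. r (t + T) = r t" "\<And>t. v (t + T) = v t"
    and avoid: "\<And>t. r t \<noteq> vector [- \<mu>, 0, 0]" "\<And>t. r t \<noteq> vector [1 - \<mu>, 0, 0]"
    and sym: "\<And>\<tau>. 0 \<le> \<tau> \<Longrightarrow> \<tau> \<le> T / 2 \<Longrightarrow>
          r (s + T - \<tau>) $ 1 = r (s + \<tau>) $ 1 \<and> v (s + T - \<tau>) $ 1 = - v (s + \<tau>) $ 1 \<and>
          r (s + T - \<tau>) $ 2 = - r (s + \<tau>) $ 2 \<and> v (s + T - \<tau>) $ 2 = v (s + \<tau>) $ 2 \<and>
          r (s + T - \<tau>) $ 3 * v (s + T - \<tau>) $ 3 = - (r (s + \<tau>) $ 3 * v (s + \<tau>) $ 3)"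
  shows "(\<forall>\<tau>0. melnikov j \<mu> r v (real a * T) s \<tau>0 =
            2 * (if a = 1 then sin (2 * \<tau>0) else 0) *
              integral {0..T/2} (\<lambda>\<tau>. Kj j \<mu> (r (s + \<tau>), v (s + \<tau>)) * cos (2 * \<tau>)
                                     - Jj j \<mu> (r (s + \<tau>), v (s + \<tau>)) * sin (2 * \<tau>)))
       \<and> (a > 1 \<longrightarrow> (\<forall>s' \<tau>0. melnikov j \<mu> r v (real a * T) s' \<tau>0 = 0))
       \<and> (a = 1 \<longrightarrow> (\<forall>k::int. melnikov j \<mu> r v (real a * T) s (of_int k * pi / 2) = 0))"
proof -
  define Jf where "Jf = (\<lambda>t. Jj j \<mu> (r t, v t))"
  define Kf where "Kf = (\<lambda>t. Kj j \<mu> (r t, v t))"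
  define Zf where "Zf = (\<lambda>t. if j = 2 then r t $ 3 * v t $ 3 else 0)"
  have hd: "\<And>t \<alpha>. hj j \<mu> (r t, v t) \<alpha> \<bullet> v t = Jf t * cos (2*\<alpha>) + Kf t * sin (2*\<alpha>) - Zf t"
    unfolding Jf_def Kf_def Zf_def by (rule h_dot)
  have dc: "\<And>k t. ((\<lambda>t. r t $ k) has_real_derivative v t $ k) (at t)"
    using bounded_linear.has_vector_derivative[OF bounded_linear_vec_nth deriv]
      has_real_derivative_iff_has_vector_derivative by blast
  have cr: "continuous_on UNIV r"
    using deriv has_vector_derivative_continuous continuous_at_imp_continuous_on by blast
  have crk: "\<And>k. continuous_on UNIV (\<lambda>t. r t $ k)" using cr by (intro continuous_intros)
  have cvk: "\<And>k. continuous_on UNIV (\<lambda>t. v t $ k)" using cont by (intro continuous_intros)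
  have cP: "continuous_on UNIV (\<lambda>t. PE1 \<mu> (r t$1) (r t$2) ((r t$3)^2) (r t$3 * v t$3) (v t$1) (v t$2))"
    "continuous_on UNIV (\<lambda>t. PE2 \<mu> (r t$1) (r t$2) ((r t$3)^2) (r t$3 * v t$3) (v t$1) (v t$2))"
    by (rule cont_PE; (intro continuous_intros crk cvk)?; rule nn_nz1 nn_nz2; rule avoid)+
  have cJ: "continuous_on UNIV Jf"
    unfolding Jf_def Jj_def J2_def J3_def Let_def fst_conv snd_conv PE1_eq
    by (cases "j = 2"; simp; intro continuous_intros cP crk cvk cr cont; simp)
  have cK: "continuous_on UNIV Kf"
    unfolding Kf_def Kj_def K2_def K3_def Let_def fst_conv snd_conv PE2_eq
    by (cases "j = 2"; simp; intro continuous_intros cP crk cvk cr cont; simp)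
  have cZ: "continuous_on UNIV Zf"
    unfolding Zf_def by (cases "j = 2"; simp; intro continuous_intros crk cvk cr cont)
  have pJ: "\<And>t. Jf (t + T) = Jf t" by (simp add: Jf_def per)
  have pK: "\<And>t. Kf (t + T) = Kf t" by (simp add: Kf_def per)
  have cJs: "\<And>s'. continuous_on UNIV (\<lambda>\<tau>. Jf (s' + \<tau>))"
    by (rule continuous_on_compose2[OF cJ]) (auto intro: continuous_intros)
  have cKs: "\<And>s'. continuous_on UNIV (\<lambda>\<tau>. Kf (s' + \<tau>))"
    by (rule continuous_on_compose2[OF cK]) (auto intro: continuous_intros)
  have cZs: "\<And>s'. continuous_on UNIV (\<lambda>\<tau>. Zf (s' + \<tau>))"
    by (rule continuous_on_compose2[OF cZ]) (auto intro: continuous_intros)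
  have pJs: "\<And>s' t. Jf (s' + (t + T)) = Jf (s' + t)" by (metis add.assoc pJ)
  have pKs: "\<And>s' t. Kf (s' + (t + T)) = Kf (s' + t)" by (metis add.assoc pK)
  have aT0: "0 \<le> real a * T" using T by simp
  have Zint: "integral {0..real a * T} (\<lambda>\<tau>. Zf (s' + \<tau>)) = 0" for s'
  proof (cases "j = 2")
    case False then show ?thesis by (simp add: Zf_def)
  next
    case True
    have d3: "\<And>x. ((\<lambda>x. r (s' + x) $ 3) has_real_derivative v (s' + x) $ 3) (at x)"
      by (rule shift_deriv(1)[OF dc])
    have "((\<lambda>\<tau>. Zf (s' + \<tau>)) has_integral ((r (s' + real a * T) $ 3)^2 / 2 - (r (s' + 0) $ 3)^2 / 2)) {0..real a * T}"
    proof (rule fundamental_theorem_of_calculus[OF aT0])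
      fix x assume "x \<in> {0..real a * T}"
      have "((\<lambda>x. (r (s' + x) $ 3)^2 / 2) has_real_derivative Zf (s' + x)) (at x)"
        using True unfolding Zf_def by (auto intro!: derivative_eq_intros d3)
      then show "((\<lambda>x. (r (s' + x) $ 3)^2 / 2) has_vector_derivative Zf (s' + x)) (at x within {0..real a * T})"
        using has_field_derivative_at_within has_real_derivative_iff_has_vector_derivative by blast
    qed
    moreover have "r (s' + real a * T) = r s'" by (rule periodic_n[of r, OF per(1)])
    ultimately show ?thesis by (simp add: integral_unique)
  qed
  have Mform: "melnikov j \<mu> r v (real a * T) s' \<tau>0 =
     integral {0..real a * T} (\<lambda>\<tau>. Jf (s' + \<tau>) * cos (2*\<tau>0 + 2*\<tau>) + Kf (s' + \<tau>) * sin (2*\<tau>0 + 2*\<tau>))"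
    for s' \<tau>0
  proof -
    let ?F = "\<lambda>\<tau>. Jf (s' + \<tau>) * cos (2*\<tau>0 + 2*\<tau>) + Kf (s' + \<tau>) * sin (2*\<tau>0 + 2*\<tau>)"
    have cF: "continuous_on UNIV ?F" using cJs cKs by (intro continuous_intros)
    have iF: "?F integrable_on {0..real a * T}"
      using cF by (meson continuous_on_subset integrable_continuous_interval subset_UNIV)
    have iZ: "(\<lambda>\<tau>. Zf (s' + \<tau>)) integrable_on {0..real a * T}"
      using cZs by (meson continuous_on_subset integrable_continuous_interval subset_UNIV)
    have "melnikov j \<mu> r v (real a * T) s' \<tau>0 = integral {0..real a * T} (\<lambda>\<tau>. ?F \<tau> - Zf (s' + \<tau>))"
      unfolding melnikov_def hd by (simp add: distrib_left)
    also have "\<dots> = integral {0..real a * T} ?F - integral {0..real a * T} (\<lambda>\<tau>. Zf (s' + \<tau>))"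
      by (rule Henstock_Kurzweil_Integration.integral_diff[OF iF iZ])
    finally show ?thesis using Zint by simp
  qed
  have many: "melnikov j \<mu> r v (real a * T) s' \<tau>0 = 0" if a1: "a > 1" for s' \<tau>0
    unfolding Mform
    by (rule many_zero[OF cJs cKs T pJs pKs a1 ab(3) ab(4)])
  have zsq: "(r (s + T - \<tau>) $ 3)^2 = (r (s + \<tau>) $ 3)^2" if h: "0 \<le> \<tau>" "\<tau> \<le> T/2" for \<tau>
  proof -
    define g where "g = (\<lambda>x. (r (s + T - x) $ 3)^2 - (r (s + x) $ 3)^2)"
    have d1: "\<And>x. ((\<lambda>x. r (s + T - x) $ 3) has_real_derivative - v (s + T - x) $ 3) (at x)"
      by (rule shift_deriv(2)[OF dc])
    have d2: "\<And>x. ((\<lambda>x. r (s + x) $ 3) has_real_derivative v (s + x) $ 3) (at x)"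
      by (rule shift_deriv(1)[OF dc])
    have dg: "\<And>x. (g has_real_derivative (of_nat 2 * (- v (s + T - x) $ 3 * (r (s + T - x) $ 3) ^ (2 - Suc 0))
        - of_nat 2 * (v (s + x) $ 3 * (r (s + x) $ 3) ^ (2 - Suc 0)))) (at x)"
      unfolding g_def by (rule DERIV_diff[OF DERIV_power[OF d1] DERIV_power[OF d2]])
    have "g (T/2) = g \<tau>"
    proof (cases "\<tau> < T/2")
      case True
      show ?thesis
      proof (rule DERIV_isconst2[of \<tau> "T/2" g "T/2"])
        show "\<tau> < T/2" by (rule True)
        show "continuous_on {\<tau>..T/2} g"
          by (rule continuous_at_imp_continuous_on) (use dg DERIV_isCont in blast)
        fix x assume x: "\<tau> < x" "x < T/2"
        have x0: "0 \<le> x" "x \<le> T/2" using x h by linarith+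
        have "r (s + T - x) $ 3 * v (s + T - x) $ 3 = - (r (s + x) $ 3 * v (s + x) $ 3)"
          using sym[OF x0] by blast
        then have e: "v (s + T - x) $ 3 * r (s + T - x) $ 3 = - (v (s + x) $ 3 * r (s + x) $ 3)"
          by (metis mult.commute)
        have z0: "of_nat 2 * (- v (s + T - x) $ 3 * (r (s + T - x) $ 3) ^ (2 - Suc 0))
            - of_nat 2 * (v (s + x) $ 3 * (r (s + x) $ 3) ^ (2 - Suc 0)) = (0::real)"
          by (simp add: e)
        show "(g has_real_derivative 0) (at x)" using dg[of x] by (simp only: z0)
      next
        show "\<tau> \<le> T/2" "T/2 \<le> T/2" using True by simp_all
      qed
    next
      case False then have t: "\<tau> = T/2" using h by simp
      show ?thesis by (simp only: t)
    qed
    moreover have "g (T/2) = 0"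
    proof -
      have "s + T - T/2 = s + T/2" by simp
      then show ?thesis unfolding g_def by (simp only: diff_self)
    qed
    ultimately show ?thesis unfolding g_def by simp
  qed
  have symJK: "Jf (s + (T - \<tau>)) = - Jf (s + \<tau>) \<and> Kf (s + (T - \<tau>)) = Kf (s + \<tau>)"
    if h: "0 \<le> \<tau>" "\<tau> \<le> T/2" for \<tau>
  proof -
    have e: "s + (T - \<tau>) = s + T - \<tau>" by simp
    note sy = sym[OF h]
    show ?thesis unfolding e Jf_def Kf_def
      using sy zsq[OF h] by (elim conjE) (intro conjI JK_sym; assumption)
  qed
  have one: "melnikov j \<mu> r v (real a * T) s \<tau>0 =
      2 * sin (2 * \<tau>0) * integral {0..T/2} (\<lambda>\<tau>. Kf (s + \<tau>) * cos (2 * \<tau>) - Jf (s + \<tau>) * sin (2 * \<tau>))"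
    if a1: "a = 1" for \<tau>0
  proof -
    have Tb: "T = real b * pi" using ab(4) a1 by simp
    have "integral {0..T} (\<lambda>\<tau>. Jf (s + \<tau>) * cos (2*\<tau>0 + 2*\<tau>) + Kf (s + \<tau>) * sin (2*\<tau>0 + 2*\<tau>))
      = 2 * sin (2 * \<tau>0) * integral {0..T/2} (\<lambda>\<tau>. Kf (s + \<tau>) * cos (2 * \<tau>) - Jf (s + \<tau>) * sin (2 * \<tau>))"
      by (rule half_sym[OF cJs cKs T Tb]) (use symJK in blast)+
    then show ?thesis unfolding Mform using a1 by simp
  qed
  have first: "\<forall>\<tau>0. melnikov j \<mu> r v (real a * T) s \<tau>0 =
            2 * (if a = 1 then sin (2 * \<tau>0) else 0) *
              integral {0..T/2} (\<lambda>\<tau>. Kj j \<mu> (r (s + \<tau>), v (s + \<tau>)) * cos (2 * \<tau>)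
                                     - Jj j \<mu> (r (s + \<tau>), v (s + \<tau>)) * sin (2 * \<tau>))"
  proof
    fix \<tau>0
    show "melnikov j \<mu> r v (real a * T) s \<tau>0 =
            2 * (if a = 1 then sin (2 * \<tau>0) else 0) *
              integral {0..T/2} (\<lambda>\<tau>. Kj j \<mu> (r (s + \<tau>), v (s + \<tau>)) * cos (2 * \<tau>)
                                     - Jj j \<mu> (r (s + \<tau>), v (s + \<tau>)) * sin (2 * \<tau>))"
    proof (cases "a = 1")
      case True then show ?thesis using one[OF True] by (simp add: Jf_def Kf_def)
    next
      case False then have "a > 1" using ab(1) by simp
      then show ?thesis using many False by simp
    qed
  qed
  have third: "a = 1 \<longrightarrow> (\<forall>k::int. melnikov j \<mu> r v (real a * T) s (of_int k * pi / 2) = 0)"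
  proof (intro impI allI)
    fix k :: int assume a1: "a = 1"
    have "sin (2 * (of_int k * pi / 2)) = 0"
      using sin_times_pi_eq_0[of "of_int k"] by simp
    then show "melnikov j \<mu> r v (real a * T) s (of_int k * pi / 2) = 0" using one[OF a1] by simp
  qed
  show ?thesis using first many third by blast
qed

end
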